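(* Let $P$ be a poset. (1) $\mathcal{M}(P)$ is a left gcd-monoid if and only if for every $a\in P$ the subset $\{x\in P: x\ge a\}$ is a meet-semilattice (under the induced order). (2) $\mathcal{M}(P)$ is a right gcd-monoid if and only if for every $a\in P$ the subset $\{x\in P:x\le a\}$ is a join-semilattice.
   Context: For a poset $P$, the interval monoid $\mathcal{M}(P)$ is the monoid presented by generators $[x,y]$ for $x\le y$ in $P$ and relations $[x,x]=1$ ($x\in P$) and $[x,z]=[x,y][y,z]$ whenever $x\le y\le z$. In a monoid $M$, $a\leqslant b$ iff $b=ax$ for some $x$, and $a\mathbin{\widetilde\leqslant}b$ iff $b=xa$ for some $x$. $M$ is a left gcd-monoid if it is conical ($xy=1\Rightarrow x=1$), left cancellative, and any two elements have a greatest lower bound w.r.t. $\leqslant$; a right gcd-monoid if it is conical, right cancellative, and any two elements have a greatest lower bound w.r.t. $\mathbin{\widetilde\leqslant}$. *)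

theory Defs
  imports Main
begin

text \<open>A monoid presented by a generating set G and a set R of relations
(pairs of words over G) is the free monoid on G (words = lists over G,
product = append, unit = empty list) modulo the congruence generated by R.
We represent its elements by words over G and equality in the monoid by
the congruence pcong R.\<close>

definition words :: "'g set \<Rightarrow> 'g list set" where
  "words G = {w. set w \<subseteq> G}"

inductive pcong :: "('g list \<times> 'g list) set \<Rightarrow> 'g list \<Rightarrow> 'g list \<Rightarrow> bool"
  for R where
  pc_refl: "pcong R u u"
| pc_sym: "pcong R u v \<Longrightarrow> pcong R v u"
| pc_trans: "pcong R u v \<Longrightarrow> pcong R v w \<Longrightarrow> pcong R u w"
| pc_rel: "(u, v) \<in> R \<Longrightarrow> pcong R (a @ u @ b) (a @ v @ b)"

definition pm_le :: "'g set \<Rightarrow> ('g list \<times> 'g list) set \<Rightarrow> 'g list \<Rightarrow> 'g list \<Rightarrow> bool" where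
  "pm_le G R a b \<longleftrightarrow> (\<exists>x\<in>words G. pcong R b (a @ x))"

definition pm_rle :: "'g set \<Rightarrow> ('g list \<times> 'g list) set \<Rightarrow> 'g list \<Rightarrow> 'g list \<Rightarrow> bool" where
  "pm_rle G R a b \<longleftrightarrow> (\<exists>x\<in>words G. pcong R b (x @ a))"

definition pm_conical :: "'g set \<Rightarrow> ('g list \<times> 'g list) set \<Rightarrow> bool" where
  "pm_conical G R \<longleftrightarrow>
     (\<forall>x\<in>words G. \<forall>y\<in>words G. pcong R (x @ y) [] \<longrightarrow> pcong R x [])"

definition pm_left_cancellative :: "'g set \<Rightarrow> ('g list \<times> 'g list) set \<Rightarrow> bool" where
  "pm_left_cancellative G R \<longleftrightarrow>
     (\<forall>a\<in>words G. \<forall>x\<in>words G. \<forall>y\<in>words G. pcong R (a @ x) (a @ y) \<longrightarrow> pcong R x y)"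

definition pm_right_cancellative :: "'g set \<Rightarrow> ('g list \<times> 'g list) set \<Rightarrow> bool" where
  "pm_right_cancellative G R \<longleftrightarrow>
     (\<forall>a\<in>words G. \<forall>x\<in>words G. \<forall>y\<in>words G. pcong R (x @ a) (y @ a) \<longrightarrow> pcong R x y)"

definition pm_left_gcd_monoid :: "'g set \<Rightarrow> ('g list \<times> 'g list) set \<Rightarrow> bool" where
  "pm_left_gcd_monoid G R \<longleftrightarrow> pm_conical G R \<and> pm_left_cancellative G R \<and>
     (\<forall>a\<in>words G. \<forall>b\<in>words G. \<exists>d\<in>words G. pm_le G R d a \<and> pm_le G R d b \<and>
        (\<forall>c\<in>words G. pm_le G R c a \<and> pm_le G R c b \<longrightarrow> pm_le G R c d))"

definition pm_right_gcd_monoid :: "'g set \<Rightarrow> ('g list \<times> 'g list) set \<Rightarrow> bool" where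
  "pm_right_gcd_monoid G R \<longleftrightarrow> pm_conical G R \<and> pm_right_cancellative G R \<and>
     (\<forall>a\<in>words G. \<forall>b\<in>words G. \<exists>d\<in>words G. pm_rle G R d a \<and> pm_rle G R d b \<and>
        (\<forall>c\<in>words G. pm_rle G R c a \<and> pm_rle G R c b \<longrightarrow> pm_rle G R c d))"

text \<open>The poset is a subset P of a type with a partial order (induced order).
Generator [x,y] is the pair (x,y).\<close>

definition iv_gens :: "'a::order set \<Rightarrow> ('a \<times> 'a) set" where
  "iv_gens P = {(x, y). x \<in> P \<and> y \<in> P \<and> x \<le> y}"

definition iv_rels :: "'a::order set \<Rightarrow> (('a \<times> 'a) list \<times> ('a \<times> 'a) list) set" where
  "iv_rels P = {([(x, x)], []) | x. x \<in> P} \<union>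
     {([(x, z)], [(x, y), (y, z)]) | x y z. x \<in> P \<and> y \<in> P \<and> z \<in> P \<and> x \<le> y \<and> y \<le> z}"

definition meet_semilattice_on :: "'a::order set \<Rightarrow> bool" where
  "meet_semilattice_on S \<longleftrightarrow> (\<forall>x\<in>S. \<forall>y\<in>S. \<exists>m\<in>S. m \<le> x \<and> m \<le> y \<and>
     (\<forall>z\<in>S. z \<le> x \<and> z \<le> y \<longrightarrow> z \<le> m))"

definition join_semilattice_on :: "'a::order set \<Rightarrow> bool" where
  "join_semilattice_on S \<longleftrightarrow> (\<forall>x\<in>S. \<forall>y\<in>S. \<exists>j\<in>S. x \<le> j \<and> y \<le> j \<and>
     (\<forall>z\<in>S. x \<le> z \<and> y \<le> z \<longrightarrow> j \<le> z))"

end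

theory Submission imports Defs begin

definition gens :: "('a \<Rightarrow> 'a \<Rightarrow> bool) \<Rightarrow> 'a set \<Rightarrow> ('a \<times> 'a) set" where
  "gens le P = {(x,y). x \<in> P \<and> y \<in> P \<and> le x y}"
definition rels :: "('a \<Rightarrow> 'a \<Rightarrow> bool) \<Rightarrow> 'a set \<Rightarrow> (('a \<times> 'a) list \<times> ('a \<times> 'a) list) set" where
  "rels le P = {([(x, x)], []) | x. x \<in> P} \<union>
     {([(x, z)], [(x, y), (y, z)]) | x y z. x \<in> P \<and> y \<in> P \<and> z \<in> P \<and> le x y \<and> le y z}"
definition msl :: "('a \<Rightarrow> 'a \<Rightarrow> bool) \<Rightarrow> 'a set \<Rightarrow> bool" where
  "msl le S \<longleftrightarrow> (\<forall>x\<in>S. \<forall>y\<in>S. \<exists>m\<in>S. le m x \<and> le m y \<and> (\<forall>z\<in>S. le z x \<and> le z y \<longrightarrow> le z m))"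

lemma pcong_app: "pcong R u v \<Longrightarrow> pcong R (a@u@b) (a@v@b)"
proof (induction rule: pcong.induct)
  case (pc_rel u v a' b')
  then show ?case using pcong.pc_rel[OF pc_rel, of "a@a'" "b'@b"] by simp
qed (auto intro: pcong.intros)

locale ivm =
  fixes le :: "'a \<Rightarrow> 'a \<Rightarrow> bool" and P :: "'a set"
  assumes lrefl: "le x x" and ltrans: "le x y \<Longrightarrow> le y z \<Longrightarrow> le x z"
    and lanti: "le x y \<Longrightarrow> le y x \<Longrightarrow> x = y"
begin

abbreviation "G \<equiv> gens le P"
abbreviation "R \<equiv> rels le P"

lemma G_iff[simp]: "(x,y) \<in> G \<longleftrightarrow> x\<in>P \<and> y\<in>P \<and> le x y" by (simp add: gens_def)

fun stepL :: "'a \<times> 'a \<Rightarrow> ('a \<times> 'a) list \<Rightarrow> ('a \<times> 'a) list" where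
  "stepL l [] = (if l \<in> G \<and> fst l = snd l then [] else [l])"
| "stepL l (m#r) = (if l \<in> G \<and> fst l = snd l then m#r
     else if l \<in> G \<and> m \<in> G \<and> snd l = fst m then (fst l, snd m)#r else l#m#r)"

definition nf :: "('a \<times> 'a) list \<Rightarrow> ('a \<times> 'a) list" where "nf u = foldr stepL u []"

lemma nf_Nil[simp]: "nf [] = []" by (simp add: nf_def)
lemma nf_Cons: "nf (l#u) = stepL l (nf u)" by (simp add: nf_def)
lemma nf_append: "nf (u@v) = foldr stepL u (nf v)" by (simp add: nf_def)

lemma stepL_triv: "x \<in> P \<Longrightarrow> stepL (x,x) s = s"
  by (cases s) (auto simp: lrefl)

lemma step_rel: "(u,v) \<in> R \<Longrightarrow> foldr stepL u s = foldr stepL v s"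
proof -
  assume "(u,v) \<in> R"
  then consider (a) x where "u = [(x,x)]" "v = []" "x \<in> P"
    | (b) x y z where "u = [(x,z)]" "v = [(x,y),(y,z)]" "x \<in> P" "y \<in> P" "z \<in> P" "le x y" "le y z"
    unfolding rels_def by blast
  then show ?thesis
  proof cases
    case a then show ?thesis by (simp add: stepL_triv)
  next
    case b
    show ?thesis
    proof (cases "x = y")
      case True then show ?thesis using b by (simp add: stepL_triv)
    next
      case xy: False
      show ?thesis
      proof (cases "y = z")
        case True then show ?thesis using b by (simp add: stepL_triv)
      next
        case False
        have "x \<noteq> z" using b xy lanti ltrans by metis
        then show ?thesis using b xy False
          by (cases s) (auto intro: ltrans)
      qed
    qed
  qed
qed

lemma pcong_nf: "pcong R u v \<Longrightarrow> nf u = nf v"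
proof (induction rule: pcong.induct)
  case (pc_rel u v a b)
  then show ?case by (simp add: nf_append step_rel)
qed auto

lemma pcong_step: "pcong R (l#s) (stepL l s)"
proof (cases s)
  case Nil
  show ?thesis
  proof (cases "l \<in> G \<and> fst l = snd l")
    case True
    then obtain x where "l = (x,x)" "x \<in> P" by (cases l) auto
    then have "([l],[]) \<in> R" by (auto simp: rels_def)
    from pcong.pc_rel[OF this, of "[]" "[]"] show ?thesis using True Nil by simp
  qed (use Nil in \<open>auto intro: pcong.intros\<close>)
next
  case (Cons m r)
  show ?thesis
  proof (cases "l \<in> G \<and> fst l = snd l")
    case True
    then obtain x where "l = (x,x)" "x \<in> P" by (cases l) auto
    then have "([l],[]) \<in> R" by (auto simp: rels_def)
    from pcong.pc_rel[OF this, of "[]" "s"] show ?thesis using True Cons by simp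
  next
    case F: False
    show ?thesis
    proof (cases "l \<in> G \<and> m \<in> G \<and> snd l = fst m")
      case True
      obtain x y where l: "l = (x,y)" by (cases l)
      obtain y' z where m: "m = (y',z)" by (cases m)
      have "([(x,z)], [(x,y),(y,z)]) \<in> R" using True l m by (auto simp: rels_def)
      from pcong.pc_rel[OF this, of "[]" r] have "pcong R ((x,z)#r) ((x,y)#(y,z)#r)" by simp
      then show ?thesis using True F l m Cons by (auto intro: pcong.intros)
    next
      case False then show ?thesis using F Cons by (auto intro: pcong.intros)
    qed
  qed
qed

lemma pcong_to_nf: "pcong R u (nf u)"
proof (induction u)
  case Nil then show ?case by (simp add: pcong.intros)
next
  case (Cons l u)
  have "pcong R ([l]@u@[]) ([l]@nf u@[])" by (rule pcong_app[OF Cons])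
  then show ?case by (simp add: nf_Cons) (meson pcong.pc_trans pcong_step)
qed

lemma pcong_iff: "pcong R u v \<longleftrightarrow> nf u = nf v"
  by (metis pcong.pc_sym pcong.pc_trans pcong_nf pcong_to_nf)


fun normal :: "('a \<times> 'a) list \<Rightarrow> bool" where
  "normal [] = True"
| "normal (l#w) = (l \<in> G \<and> fst l \<noteq> snd l \<and> (w \<noteq> [] \<longrightarrow> snd l \<noteq> fst (hd w)) \<and> normal w)"

lemma normal_step: "l \<in> G \<Longrightarrow> normal s \<Longrightarrow> normal (stepL l s)"
proof (cases s)
  case (Cons m r)
  assume l: "l \<in> G" and n: "normal s"
  obtain x y where lxy: "l = (x,y)" by (cases l)
  obtain y' z where mz: "m = (y',z)" by (cases m)
  show ?thesis
  proof (cases "x = y")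
    case True then show ?thesis using l n lxy Cons by simp
  next
    case False
    show ?thesis
    proof (cases "y = y'")
      case True
      have "x \<noteq> z" using l n lxy mz Cons True False lanti ltrans by auto
      then show ?thesis using l n lxy mz Cons True False by (auto intro: ltrans)
    next
      case F2: False
      then show ?thesis using l n lxy mz Cons False by auto
    qed
  qed
qed auto

lemma step_normal_id: "normal (l#s) \<Longrightarrow> stepL l s = l#s"
  by (cases s) auto

lemma normal_foldr: "set u \<subseteq> G \<Longrightarrow> normal s \<Longrightarrow> normal (foldr stepL u s)"
  by (induction u) (auto intro: normal_step)

lemma normal_nf: "u \<in> words G \<Longrightarrow> normal (nf u)"
  unfolding nf_def words_def by (rule normal_foldr) auto

lemma nf_id: "normal w \<Longrightarrow> nf w = w"
  by (induction w) (auto simp: nf_Cons step_normal_id)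

lemma normal_words: "normal w \<Longrightarrow> w \<in> words G"
  by (induction w) (auto simp: words_def)

fun ndiv :: "('a \<times> 'a) list \<Rightarrow> ('a \<times> 'a) list \<Rightarrow> bool" where
  "ndiv d [] = (d = [])"
| "ndiv d (l#w) = (d = [] \<or> (\<exists>r. r \<in> P \<and> d = [(fst l, r)] \<and> le (fst l) r \<and> le r (snd l) \<and> r \<noteq> fst l)
     \<or> (\<exists>d'. d = l#d' \<and> ndiv d' w))"

lemma ndiv_Nil[simp]: "ndiv [] w" by (cases w) auto

lemma ndiv_hd: "ndiv d w \<Longrightarrow> d \<noteq> [] \<Longrightarrow> w \<noteq> [] \<and> fst (hd d) = fst (hd w)"
  by (cases w) auto

lemma div1: "normal d \<Longrightarrow> ndiv d (nf (d@x))"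
proof (induction d)
  case Nil then show ?case by simp
next
  case (Cons l d)
  let ?Y = "nf (d@x)"
  have nd: "normal d" and l: "l \<in> G" "fst l \<noteq> snd l" using Cons.prems by auto
  have IH: "ndiv d ?Y" using Cons.IH nd by simp
  show ?case
  proof (cases "d = []")
    case True
    show ?thesis
    proof (cases ?Y)
      case Nil then show ?thesis using True l by (simp add: nf_Cons)
    next
      case (Cons m r)
      obtain x1 y1 where lxy: "l = (x1,y1)" by (cases l)
      obtain y' z where mz: "m = (y',z)" by (cases m)
      show ?thesis using True l Cons lxy mz by (auto simp: nf_Cons)
    qed
  next
    case False
    then have "?Y \<noteq> []" "fst (hd d) = fst (hd ?Y)" using ndiv_hd[OF IH] by auto
    moreover have "snd l \<noteq> fst (hd d)" using Cons.prems False by simp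
    ultimately have "stepL l ?Y = l # ?Y" using l
      by (cases ?Y) auto
    then show ?thesis using IH by (simp add: nf_Cons)
  qed
qed

lemma div2: "normal w \<Longrightarrow> ndiv d w \<Longrightarrow> \<exists>x\<in>words G. nf (d@x) = w"
proof (induction w arbitrary: d)
  case Nil then show ?case by (intro bexI[of _ "[]"]) (auto simp: words_def)
next
  case (Cons l w)
  have nw: "normal w" using Cons.prems by simp
  obtain p q where l: "l = (p,q)" by (cases l)
  from Cons.prems(2) consider (e) "d = []" | (s) r where "r \<in> P" "d = [(p,r)]" "le p r" "le r q" "r \<noteq> p"
    | (c) d' where "d = l#d'" "ndiv d' w" using l by auto
  then show ?case
  proof cases
    case e then show ?thesis using Cons.prems nf_id normal_words by fastforce
  next
    case s
    have lp: "p \<in> P" "q \<in> P" "le p q" "p \<noteq> q" using Cons.prems l by auto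
    have wq: "w \<noteq> [] \<longrightarrow> q \<noteq> fst (hd w)" using Cons.prems l by auto
    show ?thesis
    proof (cases "r = q")
      case True
      have "nf (d @ w) = l # w" using s True Cons.prems l
        by (simp add: nf_Cons nf_id nw step_normal_id)
      then show ?thesis using normal_words[OF nw] by blast
    next
      case False
      have n2: "normal ((r,q)#w)" using s False lp wq nw by simp
      have "nf ((r,q)#w) = (r,q)#w" by (rule nf_id[OF n2])
      then have "nf (d @ (r,q)#w) = (p,q)#w" using s lp by (simp add: nf_Cons)
      then show ?thesis using normal_words[OF n2] l by blast
    qed
  next
    case c
    from Cons.IH[OF nw c(2)] obtain x where x: "x \<in> words G" "nf (d'@x) = w" by blast
    have "nf (d@x) = l # w" using c x Cons.prems by (simp add: nf_Cons step_normal_id)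
    then show ?thesis using x by blast
  qed
qed

lemma pm_le_iff: "d \<in> words G \<Longrightarrow> w \<in> words G \<Longrightarrow> pm_le G R d w \<longleftrightarrow> ndiv (nf d) (nf w)"
proof
  assume d: "d \<in> words G" and w: "w \<in> words G"
  have key: "nf (nf d @ x) = nf (d @ x)" for x
    using pcong_app[OF pcong_to_nf[of d], of "[]" x] pcong_iff by simp
  {
    assume "pm_le G R d w"
    then obtain x where "x \<in> words G" "nf w = nf (d @ x)" by (auto simp: pm_le_def pcong_iff)
    then show "ndiv (nf d) (nf w)" using div1[OF normal_nf[OF d], of x] key by simp
  }
  {
    assume "ndiv (nf d) (nf w)"
    from div2[OF normal_nf[OF w] this] obtain x where "x \<in> words G" "nf (nf d @ x) = nf w" by blast
    then have "x \<in> words G" "nf w = nf (d @ x)" using key by auto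
    then show "pm_le G R d w" by (auto simp: pm_le_def pcong_iff)
  }
qed

lemma length_step: "length s \<le> length (stepL l s)"
  by (cases s) auto

lemma length_foldr: "length s \<le> length (foldr stepL u s)"
  by (induction u) (auto intro: le_trans length_step)

lemma conical: "pm_conical G R"
  unfolding pm_conical_def pcong_iff
proof (intro ballI impI)
  fix x y assume "nf (x @ y) = nf []"
  then have 1: "foldr stepL x (nf y) = []" by (simp add: nf_append)
  then have "nf y = []" using length_foldr[of "nf y" x] by simp
  then show "nf x = nf []" using 1 by (simp add: nf_def)
qed

lemma step_inj: "l \<in> G \<Longrightarrow> normal X \<Longrightarrow> normal Y \<Longrightarrow> stepL l X = stepL l Y \<Longrightarrow> X = Y"
proof -
  assume a: "l \<in> G" "normal X" "normal Y" "stepL l X = stepL l Y"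
  obtain p q where l: "l = (p,q)" by (cases l)
  show "X = Y"
  proof (cases "p = q")
    case True then show ?thesis using a l by (simp add: stepL_triv)
  next
    case False
    then show ?thesis using a l by (cases X; cases Y) (auto split: if_splits)
  qed
qed

lemma foldr_inj: "set a \<subseteq> G \<Longrightarrow> normal X \<Longrightarrow> normal Y \<Longrightarrow> foldr stepL a X = foldr stepL a Y \<Longrightarrow> X = Y"
proof (induction a)
  case (Cons l a)
  then show ?case using step_inj[of l "foldr stepL a X" "foldr stepL a Y"] normal_foldr by auto
qed simp

lemma left_cancel: "pm_left_cancellative G R"
  unfolding pm_left_cancellative_def pcong_iff
proof (intro ballI impI)
  fix a x y assume a: "a \<in> words G" "x \<in> words G" "y \<in> words G" "nf (a @ x) = nf (a @ y)"
  then show "nf x = nf y" using foldr_inj[of a "nf x" "nf y"] normal_nf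
    by (auto simp: nf_append words_def)
qed


definition mt :: "'a \<Rightarrow> 'a \<Rightarrow> 'a \<Rightarrow> 'a" where
  "mt p x y = (SOME m. m \<in> {z\<in>P. le p z} \<and> le m x \<and> le m y \<and>
      (\<forall>z\<in>{z\<in>P. le p z}. le z x \<and> le z y \<longrightarrow> le z m))"

lemma mt_spec:
  assumes "msl le {z\<in>P. le p z}" "x \<in> P" "le p x" "y \<in> P" "le p y"
  shows "mt p x y \<in> P \<and> le p (mt p x y) \<and> le (mt p x y) x \<and> le (mt p x y) y \<and>
      (\<forall>z\<in>P. le p z \<and> le z x \<and> le z y \<longrightarrow> le z (mt p x y))"
proof -
  have "\<exists>m. m \<in> {z\<in>P. le p z} \<and> le m x \<and> le m y \<and>
      (\<forall>z\<in>{z\<in>P. le p z}. le z x \<and> le z y \<longrightarrow> le z m)"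
    using assms unfolding msl_def by blast
  from someI_ex[OF this] show ?thesis unfolding mt_def by auto
qed

fun g :: "('a \<times> 'a) list \<Rightarrow> ('a \<times> 'a) list \<Rightarrow> ('a \<times> 'a) list" where
  "g (l#a) (l'#b) = (if fst l = fst l' then (if snd l = snd l' then l # g a b else
      (if mt (fst l) (snd l) (snd l') = fst l then [] else [(fst l, mt (fst l) (snd l) (snd l'))])) else [])"
| "g _ _ = []"

lemma ndiv_Cons_cases:
  assumes "ndiv d (l#w)"
  obtains "d = []" | r where "r \<in> P" "d = [(fst l, r)]" "le (fst l) r" "le r (snd l)" "r \<noteq> fst l"
    | d' where "d = l#d'" "ndiv d' w"
  using assms by auto

lemma ndiv_single_I: "r \<in> P \<Longrightarrow> le (fst l) r \<Longrightarrow> le r (snd l) \<Longrightarrow> r \<noteq> fst l \<Longrightarrow> ndiv [(fst l, r)] (l#w)"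
  by (subst ndiv.simps) blast

lemma ndiv_cons_I: "ndiv d w \<Longrightarrow> ndiv (l#d) (l#w)"
  by simp

lemma g_props:
  assumes H: "\<forall>a\<in>P. msl le {x\<in>P. le a x}"
  shows "normal a \<Longrightarrow> normal b \<Longrightarrow> ndiv (g a b) a \<and> ndiv (g a b) b \<and>
     (\<forall>d. ndiv d a \<and> ndiv d b \<longrightarrow> ndiv d (g a b))"
proof (induction a b rule: g.induct)
  case (1 l a l' b)
  obtain p q where l: "l = (p,q)" by (cases l)
  obtain p' q' where l': "l' = (p',q')" by (cases l')
  have lp: "p \<in> P" "q \<in> P" "le p q" "p \<noteq> q" using 1(2) l by auto
  have lp': "p' \<in> P" "q' \<in> P" "le p' q'" "p' \<noteq> q'" using 1(3) l' by auto
  show ?case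
  proof (cases "p = p'")
    case False
    have "d = []" if "ndiv d (l#a)" "ndiv d (l'#b)" for d
      by (metis False fst_conv l l' list.sel(1) ndiv_hd that)
    moreover have "g (l#a) (l'#b) = []" using False l l' by simp
    ultimately show ?thesis by (metis ndiv_Nil)
  next
    case pp: True
    show ?thesis
    proof (cases "q = q'")
      case True
      have IH: "ndiv (g a b) a \<and> ndiv (g a b) b \<and> (\<forall>d. ndiv d a \<and> ndiv d b \<longrightarrow> ndiv d (g a b))"
        using 1(1) pp True l l' 1(2,3) by simp
      have "ndiv d (l # g a b)" if "ndiv d (l#a)" "ndiv d (l'#b)" for d
      proof -
        have l'l: "l' = l" using pp True l l' by simp
        from that(1) show ?thesis
        proof (cases rule: ndiv_Cons_cases)
          case 1 then show ?thesis by simp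
        next
          case (2 r) then show ?thesis using ndiv_single_I by simp
        next
          case (3 d1)
          from that(2)[unfolded l'l] show ?thesis
          proof (cases rule: ndiv_Cons_cases)
            case 1 then show ?thesis by simp
          next
            case (2 r) then show ?thesis using ndiv_single_I by simp
          next
            case (3 d2) then show ?thesis using \<open>d = l#d1\<close> \<open>ndiv d1 a\<close> IH by simp
          qed
        qed
      qed
      moreover have "g (l#a) (l'#b) = l # g a b" using pp True l l' by simp
      moreover have "l' = l" using pp True l l' by simp
      ultimately show ?thesis using IH by simp
    next
      case False
      define m where "m = mt p q q'"
      have ms: "m \<in> P \<and> le p m \<and> le m q \<and> le m q' \<and> (\<forall>z\<in>P. le p z \<and> le z q \<and> le z q' \<longrightarrow> le z m)"
        unfolding m_def using mt_spec[of p q q'] H lp lp' pp by auto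
      have gv: "g (l#a) (l'#b) = (if m = p then [] else [(p,m)])"
        using pp False l l' m_def by simp
      have A1: "ndiv (g (l#a) (l'#b)) (l#a)"
      proof (cases "m = p")
        case True then show ?thesis using gv by simp
      next
        case False then show ?thesis using gv ms l ndiv_single_I[of m l a] by simp
      qed
      have A2: "ndiv (g (l#a) (l'#b)) (l'#b)"
      proof (cases "m = p")
        case True then show ?thesis using gv by simp
      next
        case False then show ?thesis using gv ms l' pp ndiv_single_I[of m l' b] by simp
      qed
      note A = A1 A2
      have B: "ndiv d (g (l#a) (l'#b))" if d1: "ndiv d (l#a)" and d2: "ndiv d (l'#b)" for d
      proof (cases "d = []")
        case True then show ?thesis by simp
      next
        case dne: False
        have c1: "(\<exists>r. r \<in> P \<and> d = [(p,r)] \<and> le p r \<and> le r q \<and> r \<noteq> p) \<or> (\<exists>d'. d = (p,q)#d')"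
          using d1 dne l by auto
        have c2: "(\<exists>r. r \<in> P \<and> d = [(p,r)] \<and> le p r \<and> le r q' \<and> r \<noteq> p) \<or> (\<exists>d'. d = (p,q')#d')"
          using d2 dne l' pp by auto
        have "\<exists>r. r \<in> P \<and> d = [(p,r)] \<and> le p r \<and> le r q \<and> le r q' \<and> r \<noteq> p"
        proof -
          from c1 show ?thesis
          proof
            assume "\<exists>r. r \<in> P \<and> d = [(p,r)] \<and> le p r \<and> le r q \<and> r \<noteq> p"
            then obtain r where r: "r \<in> P" "d = [(p,r)]" "le p r" "le r q" "r \<noteq> p" by blast
            from c2 show ?thesis
            proof
              assume "\<exists>r. r \<in> P \<and> d = [(p,r)] \<and> le p r \<and> le r q' \<and> r \<noteq> p"
              then show ?thesis using r by auto
            next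
              assume "\<exists>d'. d = (p,q')#d'"
              then have "r = q'" using r by auto
              then show ?thesis using r lrefl by auto
            qed
          next
            assume "\<exists>d'. d = (p,q)#d'"
            then obtain d' where d': "d = (p,q)#d'" by blast
            from c2 show ?thesis
            proof
              assume "\<exists>r. r \<in> P \<and> d = [(p,r)] \<and> le p r \<and> le r q' \<and> r \<noteq> p"
              then show ?thesis using d' lp lrefl by auto
            next
              assume "\<exists>d'. d = (p,q')#d'"
              then show ?thesis using d' False by auto
            qed
          qed
        qed
        then obtain r where r: "r \<in> P" "d = [(p,r)]" "le p r" "le r q" "le r q'" "r \<noteq> p" by blast
        have "le r m" using ms r by blast
        then have "m \<noteq> p" using r lanti by blast
        then show ?thesis using gv r \<open>le r m\<close> ms l ndiv_single_I[of r "(p,m)" "[]"] by simp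
      qed
      show ?thesis using A B by blast
    qed
  qed
qed auto

lemma ndiv_normal: "ndiv d w \<Longrightarrow> normal w \<Longrightarrow> normal d"
proof (induction w arbitrary: d)
  case (Cons l w)
  then show ?case
  proof (cases "\<exists>d'. d = l#d' \<and> ndiv d' w")
    case True
    then obtain d' where d': "d = l#d'" "ndiv d' w" by blast
    have "normal d'" using Cons d' by simp
    moreover have "d' \<noteq> [] \<longrightarrow> snd l \<noteq> fst (hd d')" using ndiv_hd[OF d'(2)] Cons.prems(2) by auto
    ultimately show ?thesis using d' Cons.prems(2) by simp
  next
    case False then show ?thesis using Cons by (cases l) auto
  qed
qed simp

lemma nf_single: "(p,q) \<in> G \<Longrightarrow> nf [(p,q)] = (if p = q then [] else [(p,q)])"
  by (simp add: nf_Cons)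

theorem left_main: "pm_left_gcd_monoid G R \<longleftrightarrow> (\<forall>a\<in>P. msl le {x\<in>P. le a x})"
proof
  assume L: "pm_left_gcd_monoid G R"
  show "\<forall>a\<in>P. msl le {x\<in>P. le a x}"
    unfolding msl_def
  proof (intro ballI)
    fix a x y assume a: "a \<in> P" and x: "x \<in> {x\<in>P. le a x}" and y: "y \<in> {x\<in>P. le a x}"
    have wx: "[(a,x)] \<in> words G" and wy: "[(a,y)] \<in> words G" using a x y by (auto simp: words_def)
    from L wx wy obtain d where d: "d \<in> words G" "pm_le G R d [(a,x)]" "pm_le G R d [(a,y)]"
      "\<forall>c\<in>words G. pm_le G R c [(a,x)] \<and> pm_le G R c [(a,y)] \<longrightarrow> pm_le G R c d"
      unfolding pm_left_gcd_monoid_def by blast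
    define D where "D = nf d"
    have dx: "ndiv D (nf [(a,x)])" and dy: "ndiv D (nf [(a,y)])"
      using d wx wy pm_le_iff D_def by auto
    have nfx: "nf [(a,x)] = (if a = x then [] else [(a,x)])" using nf_single a x by auto
    have nfy: "nf [(a,y)] = (if a = y then [] else [(a,y)])" using nf_single a y by auto
    have Dform: "D = [] \<or> (\<exists>r. r \<in> P \<and> D = [(a,r)] \<and> le a r \<and> le r x \<and> le r y \<and> r \<noteq> a)"
      proof (cases "D = []")
      case False
      have xa: "x \<noteq> a" using dx nfx False by auto
      have ya: "y \<noteq> a" using dy nfy False by auto
      have dx': "ndiv D [(a,x)]" using dx nfx xa by simp
      have dy': "ndiv D [(a,y)]" using dy nfy ya by simp
      from dx' obtain r where r: "r \<in> P" "D = [(a,r)]" "le a r" "le r x" "r \<noteq> a"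
      proof (cases rule: ndiv_Cons_cases)
        case 1 then show ?thesis using False by simp
      next
        case (2 r) then show ?thesis using that by simp
      next
        case (3 d') then have "D = [(a,x)]" by simp
        then show ?thesis using x xa lrefl by (intro that[of x]) auto
      qed
      from dy' have "le r y"
      proof (cases rule: ndiv_Cons_cases)
        case 1 then show ?thesis using False by simp
      next
        case (2 r') then show ?thesis using r by simp
      next
        case (3 d') then show ?thesis using r lrefl by simp
      qed
      then show ?thesis using r by blast
    qed simp
    define m where "m = (if D = [] then a else snd (hd D))"
    have m1: "m \<in> {x\<in>P. le a x}" "le m x" "le m y"
      using Dform m_def a x y by (auto intro: lrefl)
    have m2: "le z m" if z: "z \<in> {x\<in>P. le a x}" "le z x" "le z y" for z
    proof (cases "z = a")
      case True then show ?thesis using m1 by simp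
    next
      case False
      have wz: "[(a,z)] \<in> words G" using a z by (auto simp: words_def)
      have nfz: "nf [(a,z)] = [(a,z)]" using nf_single a z False by auto
      have "x \<noteq> a" "y \<noteq> a" using z False lanti by auto
      then have "pm_le G R [(a,z)] [(a,x)]" "pm_le G R [(a,z)] [(a,y)]"
        using pm_le_iff[OF wz wx] pm_le_iff[OF wz wy] nfz nfx nfy z False by auto
      then have "pm_le G R [(a,z)] d" using d(4) wz by blast
      then have "ndiv [(a,z)] D" using pm_le_iff[OF wz d(1)] nfz D_def by simp
      then show ?thesis using Dform m_def z by (auto intro: lrefl)
    qed
    show "\<exists>m\<in>{x\<in>P. le a x}. le m x \<and> le m y \<and> (\<forall>z\<in>{x\<in>P. le a x}. le z x \<and> le z y \<longrightarrow> le z m)"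
      using m1 m2 by blast
  qed
next
  assume H: "\<forall>a\<in>P. msl le {x\<in>P. le a x}"
  have "\<exists>d\<in>words G. pm_le G R d a \<and> pm_le G R d b \<and>
        (\<forall>c\<in>words G. pm_le G R c a \<and> pm_le G R c b \<longrightarrow> pm_le G R c d)"
    if a: "a \<in> words G" and b: "b \<in> words G" for a b
  proof -
    define d where "d = g (nf a) (nf b)"
    have gp: "ndiv d (nf a) \<and> ndiv d (nf b) \<and> (\<forall>e. ndiv e (nf a) \<and> ndiv e (nf b) \<longrightarrow> ndiv e d)"
      using g_props[OF H normal_nf[OF a] normal_nf[OF b]] d_def by simp
    have nd: "normal d" using ndiv_normal gp normal_nf[OF a] by blast
    have wd: "d \<in> words G" using normal_words[OF nd] .
    have nfd: "nf d = d" using nf_id[OF nd] .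
    show ?thesis
      using gp wd nfd pm_le_iff[OF wd a] pm_le_iff[OF wd b] pm_le_iff[OF _ a] pm_le_iff[OF _ b]
        pm_le_iff[OF _ wd] by (intro bexI[of _ d]) auto
  qed
  then show "pm_left_gcd_monoid G R"
    unfolding pm_left_gcd_monoid_def using conical left_cancel by blast
qed

end

definition mirror :: "('a \<times> 'a) list \<Rightarrow> ('a \<times> 'a) list" where
  "mirror u = rev (map prod.swap u)"

lemma mirror_mirror[simp]: "mirror (mirror u) = u" by (simp add: mirror_def rev_map)
lemma mirror_append[simp]: "mirror (u@v) = mirror v @ mirror u" by (simp add: mirror_def)
lemma mirror_Nil[simp]: "mirror [] = []" by (simp add: mirror_def)

lemma rels_mirror: "(u,v) \<in> rels le P \<Longrightarrow> (mirror u, mirror v) \<in> rels (\<lambda>x y. le y x) P"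
  by (auto simp: rels_def mirror_def)

lemma pcong_mirror: "pcong (rels le P) u v \<Longrightarrow> pcong (rels (\<lambda>x y. le y x) P) (mirror u) (mirror v)"
proof (induction rule: pcong.induct)
  case (pc_rel u v a b)
  show ?case using pcong.pc_rel[OF rels_mirror[OF pc_rel], of "mirror b" "mirror a"] by simp
qed (auto intro: pcong.intros)

lemma pcong_mirror_iff: "pcong (rels le P) u v \<longleftrightarrow> pcong (rels (\<lambda>x y. le y x) P) (mirror u) (mirror v)"
  using pcong_mirror[of le P u v] pcong_mirror[of "\<lambda>x y. le y x" P "mirror u" "mirror v"] by auto

lemma words_mirror: "u \<in> words (gens le P) \<longleftrightarrow> mirror u \<in> words (gens (\<lambda>x y. le y x) P)"
  by (auto simp: words_def gens_def mirror_def)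

lemma rle_mirror: "pm_rle (gens le P) (rels le P) a b \<longleftrightarrow>
   pm_le (gens (\<lambda>x y. le y x) P) (rels (\<lambda>x y. le y x) P) (mirror a) (mirror b)"
proof
  assume "pm_rle (gens le P) (rels le P) a b"
  then obtain x where "x \<in> words (gens le P)" "pcong (rels le P) b (x @ a)" by (auto simp: pm_rle_def)
  then show "pm_le (gens (\<lambda>x y. le y x) P) (rels (\<lambda>x y. le y x) P) (mirror a) (mirror b)"
    unfolding pm_le_def using pcong_mirror_iff words_mirror by (metis mirror_append)
next
  assume "pm_le (gens (\<lambda>x y. le y x) P) (rels (\<lambda>x y. le y x) P) (mirror a) (mirror b)"
  then obtain x where x: "x \<in> words (gens (\<lambda>x y. le y x) P)"
    "pcong (rels (\<lambda>x y. le y x) P) (mirror b) (mirror a @ x)" by (auto simp: pm_le_def)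
  have "mirror x \<in> words (gens le P)" using x words_mirror by (metis mirror_mirror)
  moreover have "pcong (rels le P) b (mirror x @ a)" using x pcong_mirror_iff by (metis mirror_append mirror_mirror)
  ultimately show "pm_rle (gens le P) (rels le P) a b" by (auto simp: pm_rle_def)
qed

lemma rcancel_mirror: "pm_left_cancellative (gens (\<lambda>x y. le y x) P) (rels (\<lambda>x y. le y x) P) \<Longrightarrow>
  pm_right_cancellative (gens le P) (rels le P)"
  unfolding pm_left_cancellative_def pm_right_cancellative_def
proof (intro ballI impI)
  fix a x y
  assume L: "\<forall>a\<in>words (gens (\<lambda>x y. le y x) P). \<forall>x\<in>words (gens (\<lambda>x y. le y x) P). \<forall>y\<in>words (gens (\<lambda>x y. le y x) P).
     pcong (rels (\<lambda>x y. le y x) P) (a @ x) (a @ y) \<longrightarrow> pcong (rels (\<lambda>x y. le y x) P) x y"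
    and w: "a \<in> words (gens le P)" "x \<in> words (gens le P)" "y \<in> words (gens le P)"
    and c: "pcong (rels le P) (x @ a) (y @ a)"
  have "pcong (rels (\<lambda>x y. le y x) P) (mirror a @ mirror x) (mirror a @ mirror y)"
    using c pcong_mirror_iff by (metis mirror_append)
  then have "pcong (rels (\<lambda>x y. le y x) P) (mirror x) (mirror y)"
    using L w words_mirror by blast
  then show "pcong (rels le P) x y" using pcong_mirror_iff by blast
qed

definition LG where "LG G R \<longleftrightarrow> (\<forall>a\<in>words G. \<forall>b\<in>words G. \<exists>d\<in>words G. pm_le G R d a \<and> pm_le G R d b \<and>
        (\<forall>c\<in>words G. pm_le G R c a \<and> pm_le G R c b \<longrightarrow> pm_le G R c d))"
definition RG where "RG G R \<longleftrightarrow> (\<forall>a\<in>words G. \<forall>b\<in>words G. \<exists>d\<in>words G. pm_rle G R d a \<and> pm_rle G R d b \<and>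
        (\<forall>c\<in>words G. pm_rle G R c a \<and> pm_rle G R c b \<longrightarrow> pm_rle G R c d))"

lemma RG_mirror: "RG (gens le P) (rels le P) \<longleftrightarrow> LG (gens (\<lambda>x y. le y x) P) (rels (\<lambda>x y. le y x) P)"
proof
  assume H: "RG (gens le P) (rels le P)"
  show "LG (gens (\<lambda>x y. le y x) P) (rels (\<lambda>x y. le y x) P)"
    unfolding LG_def
  proof (intro ballI)
    fix a b assume a: "a \<in> words (gens (\<lambda>x y. le y x) P)" and b: "b \<in> words (gens (\<lambda>x y. le y x) P)"
    have "mirror a \<in> words (gens le P)" "mirror b \<in> words (gens le P)"
      using a b words_mirror by (metis mirror_mirror)+
    with H obtain d where d: "d \<in> words (gens le P)" "pm_rle (gens le P) (rels le P) d (mirror a)"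
      "pm_rle (gens le P) (rels le P) d (mirror b)"
      "\<forall>c\<in>words (gens le P). pm_rle (gens le P) (rels le P) c (mirror a) \<and> pm_rle (gens le P) (rels le P) c (mirror b)
         \<longrightarrow> pm_rle (gens le P) (rels le P) c d"
      unfolding RG_def by blast
    show "\<exists>d\<in>words (gens (\<lambda>x y. le y x) P). pm_le (gens (\<lambda>x y. le y x) P) (rels (\<lambda>x y. le y x) P) d a \<and>
      pm_le (gens (\<lambda>x y. le y x) P) (rels (\<lambda>x y. le y x) P) d b \<and>
      (\<forall>c\<in>words (gens (\<lambda>x y. le y x) P). pm_le (gens (\<lambda>x y. le y x) P) (rels (\<lambda>x y. le y x) P) c a \<and>
        pm_le (gens (\<lambda>x y. le y x) P) (rels (\<lambda>x y. le y x) P) c b \<longrightarrow>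
        pm_le (gens (\<lambda>x y. le y x) P) (rels (\<lambda>x y. le y x) P) c d)"
    proof (intro bexI[of _ "mirror d"] conjI ballI impI)
      show "mirror d \<in> words (gens (\<lambda>x y. le y x) P)" using d(1) words_mirror by blast
      show "pm_le (gens (\<lambda>x y. le y x) P) (rels (\<lambda>x y. le y x) P) (mirror d) a"
        using d(2) rle_mirror by (metis mirror_mirror)
      show "pm_le (gens (\<lambda>x y. le y x) P) (rels (\<lambda>x y. le y x) P) (mirror d) b"
        using d(3) rle_mirror by (metis mirror_mirror)
      fix c assume c: "c \<in> words (gens (\<lambda>x y. le y x) P)"
        "pm_le (gens (\<lambda>x y. le y x) P) (rels (\<lambda>x y. le y x) P) c a \<and> pm_le (gens (\<lambda>x y. le y x) P) (rels (\<lambda>x y. le y x) P) c b"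
      have "mirror c \<in> words (gens le P)" using c words_mirror by (metis mirror_mirror)
      moreover have "pm_rle (gens le P) (rels le P) (mirror c) (mirror a)" "pm_rle (gens le P) (rels le P) (mirror c) (mirror b)"
        using c rle_mirror by (metis mirror_mirror)+
      ultimately have "pm_rle (gens le P) (rels le P) (mirror c) d" using d(4) by blast
      then show "pm_le (gens (\<lambda>x y. le y x) P) (rels (\<lambda>x y. le y x) P) c (mirror d)"
        using rle_mirror by (metis mirror_mirror)
    qed
  qed
next
  assume H: "LG (gens (\<lambda>x y. le y x) P) (rels (\<lambda>x y. le y x) P)"
  show "RG (gens le P) (rels le P)"
    unfolding RG_def
  proof (intro ballI)
    fix a b assume a: "a \<in> words (gens le P)" and b: "b \<in> words (gens le P)"
    have "mirror a \<in> words (gens (\<lambda>x y. le y x) P)" "mirror b \<in> words (gens (\<lambda>x y. le y x) P)"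
      using a b words_mirror by blast+
    with H obtain d where d: "d \<in> words (gens (\<lambda>x y. le y x) P)"
      "pm_le (gens (\<lambda>x y. le y x) P) (rels (\<lambda>x y. le y x) P) d (mirror a)"
      "pm_le (gens (\<lambda>x y. le y x) P) (rels (\<lambda>x y. le y x) P) d (mirror b)"
      "\<forall>c\<in>words (gens (\<lambda>x y. le y x) P). pm_le (gens (\<lambda>x y. le y x) P) (rels (\<lambda>x y. le y x) P) c (mirror a) \<and>
         pm_le (gens (\<lambda>x y. le y x) P) (rels (\<lambda>x y. le y x) P) c (mirror b)
         \<longrightarrow> pm_le (gens (\<lambda>x y. le y x) P) (rels (\<lambda>x y. le y x) P) c d"
      unfolding LG_def by blast
    show "\<exists>d\<in>words (gens le P). pm_rle (gens le P) (rels le P) d a \<and> pm_rle (gens le P) (rels le P) d b \<and>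
        (\<forall>c\<in>words (gens le P). pm_rle (gens le P) (rels le P) c a \<and> pm_rle (gens le P) (rels le P) c b \<longrightarrow>
           pm_rle (gens le P) (rels le P) c d)"
    proof (intro bexI[of _ "mirror d"] conjI ballI impI)
      show "mirror d \<in> words (gens le P)" using d(1) words_mirror by (metis mirror_mirror)
      show "pm_rle (gens le P) (rels le P) (mirror d) a" using d(2) rle_mirror by (metis mirror_mirror)
      show "pm_rle (gens le P) (rels le P) (mirror d) b" using d(3) rle_mirror by (metis mirror_mirror)
      fix c assume c: "c \<in> words (gens le P)"
        "pm_rle (gens le P) (rels le P) c a \<and> pm_rle (gens le P) (rels le P) c b"
      have "mirror c \<in> words (gens (\<lambda>x y. le y x) P)" using c words_mirror by blast
      moreover have "pm_le (gens (\<lambda>x y. le y x) P) (rels (\<lambda>x y. le y x) P) (mirror c) (mirror a)"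
        "pm_le (gens (\<lambda>x y. le y x) P) (rels (\<lambda>x y. le y x) P) (mirror c) (mirror b)"
        using c rle_mirror by blast+
      ultimately have "pm_le (gens (\<lambda>x y. le y x) P) (rels (\<lambda>x y. le y x) P) (mirror c) d" using d(4) by blast
      then show "pm_rle (gens le P) (rels le P) c (mirror d)" using rle_mirror by (metis mirror_mirror)
    qed
  qed
qed

theorem proposition7p8:
  fixes P :: "'a::order set"
  shows "(pm_left_gcd_monoid (iv_gens P) (iv_rels P) \<longleftrightarrow>
            (\<forall>a\<in>P. meet_semilattice_on {x\<in>P. a \<le> x}))
       \<and> (pm_right_gcd_monoid (iv_gens P) (iv_rels P) \<longleftrightarrow>
            (\<forall>a\<in>P. join_semilattice_on {x\<in>P. x \<le> a}))"
proof -
  interpret A: ivm "(\<le>) :: 'a \<Rightarrow> 'a \<Rightarrow> bool" P by unfold_locales auto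
  interpret B: ivm "\<lambda>x y::'a. y \<le> x" P by unfold_locales auto
  have g1: "iv_gens P = gens (\<le>) P" by (simp add: iv_gens_def gens_def)
  have r1: "iv_rels P = rels (\<le>) P" by (simp add: iv_rels_def rels_def)
  have m1: "msl (\<le>) S = meet_semilattice_on S" for S :: "'a set"
    by (simp add: msl_def meet_semilattice_on_def)
  have j1: "msl (\<lambda>x y::'a. y \<le> x) S = join_semilattice_on S" for S :: "'a set"
    by (simp add: msl_def join_semilattice_on_def)
  have part1: "pm_left_gcd_monoid (iv_gens P) (iv_rels P) \<longleftrightarrow> (\<forall>a\<in>P. meet_semilattice_on {x\<in>P. a \<le> x})"
    using A.left_main by (simp add: g1 r1 m1)
  have "pm_right_gcd_monoid (gens (\<le>) P) (rels (\<le>) P) \<longleftrightarrow> RG (gens (\<le>) P) (rels (\<le>) P)"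
    using A.conical rcancel_mirror[OF B.left_cancel] unfolding pm_right_gcd_monoid_def RG_def by blast
  also have "\<dots> \<longleftrightarrow> LG (gens (\<lambda>x y::'a. y \<le> x) P) (rels (\<lambda>x y. y \<le> x) P)" by (rule RG_mirror)
  also have "\<dots> \<longleftrightarrow> pm_left_gcd_monoid (gens (\<lambda>x y::'a. y \<le> x) P) (rels (\<lambda>x y. y \<le> x) P)"
    using B.conical B.left_cancel unfolding pm_left_gcd_monoid_def LG_def by blast
  also have "\<dots> \<longleftrightarrow> (\<forall>a\<in>P. join_semilattice_on {x\<in>P. x \<le> a})"
    using B.left_main by (simp add: j1)
  finally have part2: "pm_right_gcd_monoid (iv_gens P) (iv_rels P) \<longleftrightarrow> (\<forall>a\<in>P. join_semilattice_on {x\<in>P. x \<le> a})"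
    by (simp add: g1 r1)
  show ?thesis using part1 part2 by blast
qed

end
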